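(* Let $p$ be a prime, $q=p^r$, $\mathscr{C}\subseteq\mathbb{F}_q^n$ a linear code over $\mathbb{F}_q$ of dimension $k$ ($1\le k<n$), $m\ge2$, $\mathscr{D}=\{(\lambda,\ldots,\lambda):\lambda\in\mathbb{F}_{q^k}\}\subset\mathbb{F}_{q^k}^m$, $\kappa:\mathbb{F}_{q^k}\to\mathcal{L}(\mathscr{C},\mathbb{F}_p)$ an $\mathbb{F}_p$-linear isomorphism, $f_\lambda=\kappa(\lambda)$, and $Q=\operatorname{span}\{\Phi_\Lambda:\Lambda\in\mathscr{D}\}$, a stabilizer code with minimum distance $\delta$. Then $\delta=\min\{d(\mathscr{C}),m\}$, and the stabilizer group of $Q$ consists exactly of the errors $X(\mathbf{c}_1,\ldots,\mathbf{c}_m)Z(\mathbf{d}_1,\ldots,\mathbf{d}_m)$ with $\mathbf{c}_1,\ldots,\mathbf{c}_m\in\mathscr{C}$, $\sum_{i=1}^m\mathbf{c}_i=0$, and $\mathbf{d}_1,\ldots,\mathbf{d}_m\in\mathscr{C}^\perp$.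
   Context: $\zeta=e^{2\pi i/p}$; $\operatorname{tr}:\mathbb{F}_q\to\mathbb{F}_p$ the trace; $\mathscr{C}^\perp$ the Euclidean dual; $d(\mathscr{C})$ the minimum Hamming distance. $\mathcal{L}(\mathscr{C},\mathbb{F}_p)$ is the space of $\mathbb{F}_p$-linear maps $\mathscr{C}\to\mathbb{F}_p$. $\phi_\lambda=q^{-k/2}\sum_{\mathbf{c}\in\mathscr{C}}\zeta^{f_\lambda(\mathbf{c})}|\mathbf{c}\rangle$, $\Phi_\Lambda=\phi_{\lambda_1}\otimes\cdots\otimes\phi_{\lambda_m}$ in $(\mathbb{C}^q)^{\otimes nm}$ (orthonormal basis $|\mathbf{x}\rangle$, $\mathbf{x}\in\mathbb{F}_q^{nm}$). Errors: $X(a)|x\rangle=|x+a\rangle$, $Z(b)|x\rangle=\zeta^{\operatorname{tr}(bx)}|x\rangle$, tensored to $X(\mathbf{a}),Z(\mathbf{b})$; error group $\mathcal{P}_{nm}=\{\omega^cX(\mathbf{a})Z(\mathbf{b})\}$ with $\omega=\zeta,c\in\mathbb{F}_p$ ($p$ odd) or $\omega=i,c\in\{0,1,2,3\}$ ($p=2$); weight of $\omega^cX(\mathbf{a})Z(\mathbf{b})$ is $\#\{j:(a_j,b_j)\ne(0,0)\}$. The stabilizer group is $\mathcal{S}=\{E\in\mathcal{P}_{nm}:Ev=v\ \forall v\in Q\}$, and $\delta=\min\{\operatorname{wt}(E):E\in C_{\mathcal{P}_{nm}}(\mathcal{S})\setminus\mathcal{S}\mathcal{Z}(\mathcal{P}_{nm})\}$,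 where $\mathcal{Z}(\mathcal{P}_{nm})$ is the set of scalar elements. *)

theory Defs
  imports "HOL-Analysis.Analysis" "HOL-Library.Function_Algebras"
begin

text \<open>Vectors of length N over 'a are functions nat => 'a vanishing from index N on.\<close>
definition vecs :: "nat \<Rightarrow> (nat \<Rightarrow> 'a::zero) set" where
  "vecs N = {v. \<forall>i\<ge>N. v i = 0}"

definition fscale :: "'a::times \<Rightarrow> (nat \<Rightarrow> 'a) \<Rightarrow> nat \<Rightarrow> 'a" where
  "fscale c v = (\<lambda>i. c * v i)"

definition linear_code :: "nat \<Rightarrow> (nat \<Rightarrow> 'a::field) set \<Rightarrow> bool" where
  "linear_code n C \<longleftrightarrow> C \<subseteq> vecs n \<and> module.subspace fscale C"

definition code_dim :: "(nat \<Rightarrow> 'a::field) set \<Rightarrow> nat" where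
  "code_dim C = vector_space.dim fscale C"

definition hamming_wt :: "nat \<Rightarrow> (nat \<Rightarrow> 'a::zero) \<Rightarrow> nat" where
  "hamming_wt N v = card {i. i < N \<and> v i \<noteq> 0}"

definition min_dist :: "nat \<Rightarrow> (nat \<Rightarrow> 'a::zero) set \<Rightarrow> nat" where
  "min_dist n C = Min {hamming_wt n c | c. c \<in> C \<and> c \<noteq> 0}"

definition dual_code :: "nat \<Rightarrow> (nat \<Rightarrow> 'a::field) set \<Rightarrow> (nat \<Rightarrow> 'a) set" where
  "dual_code n C = {v \<in> vecs n. \<forall>c\<in>C. (\<Sum>i<n. v i * c i) = 0}"

text \<open>F_p is represented by {0..<p} (nat) with arithmetic mod p; inside 'a (characteristic p)
  the residue j corresponds to of_nat j.\<close>
definition zeta :: "nat \<Rightarrow> complex" where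
  "zeta p = cis (2 * pi / real p)"

text \<open>Trace F_q -> F_p, q = p^r: x + x^p + ... + x^(p^(r-1)), which lies in the prime field.\<close>
definition ftrace :: "nat \<Rightarrow> nat \<Rightarrow> 'a::field \<Rightarrow> 'a" where
  "ftrace p r x = (\<Sum>i<r. x ^ (p ^ i))"

definition tr :: "nat \<Rightarrow> nat \<Rightarrow> 'a::field \<Rightarrow> nat" where
  "tr p r x = (THE j. j < p \<and> of_nat j = ftrace p r x)"

text \<open>L(C, F_p): F_p-linear maps C -> F_p (extended by 0 outside C).\<close>
definition lin_functionals :: "nat \<Rightarrow> (nat \<Rightarrow> 'a::field) set \<Rightarrow> ((nat \<Rightarrow> 'a) \<Rightarrow> nat) set" where
  "lin_functionals p C = {f. (\<forall>c\<in>C. f c < p)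
      \<and> (\<forall>c\<in>C. \<forall>c'\<in>C. f (\<lambda>i. c i + c' i) = (f c + f c') mod p)
      \<and> (\<forall>a<p. \<forall>c\<in>C. f (fscale (of_nat a) c) = (a * f c) mod p)
      \<and> (\<forall>c. c \<notin> C \<longrightarrow> f c = 0)}"

definition Fp_lin_iso :: "nat \<Rightarrow> (nat \<Rightarrow> 'a::field) set \<Rightarrow> ('b::field \<Rightarrow> (nat \<Rightarrow> 'a) \<Rightarrow> nat) \<Rightarrow> bool" where
  "Fp_lin_iso p C \<kappa> \<longleftrightarrow> bij_betw \<kappa> UNIV (lin_functionals p C)
      \<and> (\<forall>l u. \<forall>c\<in>C. \<kappa> (l + u) c = (\<kappa> l c + \<kappa> u c) mod p)
      \<and> (\<forall>a<p. \<forall>l. \<forall>c\<in>C. \<kappa> (of_nat a * l) c = (a * \<kappa> l c) mod p)"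

text \<open>A state of (C^q)^{tensor N} is a function F_q^N -> complex (coefficients w.r.t. |x>),
  vanishing outside vecs N.\<close>
type_synonym 'a state = "(nat \<Rightarrow> 'a) \<Rightarrow> complex"

definition block :: "nat \<Rightarrow> nat \<Rightarrow> (nat \<Rightarrow> 'a::zero) \<Rightarrow> nat \<Rightarrow> 'a" where
  "block n i x = (\<lambda>j. if j < n then x (i * n + j) else 0)"

definition phi :: "nat \<Rightarrow> nat \<Rightarrow> (nat \<Rightarrow> 'a::{finite,field}) set \<Rightarrow> ('b \<Rightarrow> (nat \<Rightarrow> 'a) \<Rightarrow> nat)
     \<Rightarrow> 'b \<Rightarrow> 'a state" where
  "phi p k C \<kappa> l v = (if v \<in> C then complex_of_real (real CARD('a) powr (- real k / 2)) * zeta p ^ (\<kappa> l v) else 0)"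

text \<open>Phi_Lambda = phi_{Lambda 0} tensor ... tensor phi_{Lambda (m-1)}; block i of x in F_q^{nm}
  is the i-th tensor factor.\<close>
definition Phi :: "nat \<Rightarrow> nat \<Rightarrow> nat \<Rightarrow> nat \<Rightarrow> (nat \<Rightarrow> 'a::{finite,field}) set \<Rightarrow> ('b \<Rightarrow> (nat \<Rightarrow> 'a) \<Rightarrow> nat)
     \<Rightarrow> (nat \<Rightarrow> 'b) \<Rightarrow> 'a state" where
  "Phi p n m k C \<kappa> \<Lambda> x = (if x \<in> vecs (n * m) then (\<Prod>i<m. phi p k C \<kappa> (\<Lambda> i) (block n i x)) else 0)"

definition diag :: "nat \<Rightarrow> (nat \<Rightarrow> 'b::zero) set" where
  "diag m = {\<Lambda>. \<exists>l. \<Lambda> = (\<lambda>i. if i < m then l else 0)}"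

definition cspan :: "'a state set \<Rightarrow> 'a state set" where
  "cspan V = {\<psi>. \<exists>a. \<psi> = (\<lambda>x. \<Sum>v\<in>V. a v * v x)}"

definition code_space :: "nat \<Rightarrow> nat \<Rightarrow> nat \<Rightarrow> nat \<Rightarrow> (nat \<Rightarrow> 'a::{finite,field}) set
     \<Rightarrow> ('b::{finite,field} \<Rightarrow> (nat \<Rightarrow> 'a) \<Rightarrow> nat) \<Rightarrow> 'a state set" where
  "code_space p n m k C \<kappa> = cspan (Phi p n m k C \<kappa> ` diag m)"

text \<open>omega^c I X(a) Z(b): X(a)|x> = |x+a>, Z(b)|x> = prod_j zeta^(tr(b_j x_j)) |x>.
  Coefficient of |y> in w X(a) Z(b) psi is w zeta^(tr(b.(y-a))) psi(y-a).\<close>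
definition err_op :: "nat \<Rightarrow> nat \<Rightarrow> nat \<Rightarrow> complex \<Rightarrow> (nat \<Rightarrow> 'a::field) \<Rightarrow> (nat \<Rightarrow> 'a)
     \<Rightarrow> 'a state \<Rightarrow> 'a state" where
  "err_op p r N w a b \<psi> = (\<lambda>y. if y \<in> vecs N
      then w * (\<Prod>j<N. zeta p ^ tr p r (b j * (y j - a j))) * \<psi> (\<lambda>j. y j - a j) else 0)"

definition omega_pows :: "nat \<Rightarrow> complex set" where
  "omega_pows p = (if p = 2 then {\<i> ^ c | c. c < 4} else {zeta p ^ c | c. c < p})"

definition pauli :: "nat \<Rightarrow> nat \<Rightarrow> nat \<Rightarrow> ('a::field state \<Rightarrow> 'a state) set" where
  "pauli p r N = {err_op p r N w a b | w a b. w \<in> omega_pows p \<and> a \<in> vecs N \<and> b \<in> vecs N}"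

definition err_wt :: "nat \<Rightarrow> nat \<Rightarrow> nat \<Rightarrow> ('a::field state \<Rightarrow> 'a state) \<Rightarrow> nat" where
  "err_wt p r N E = (LEAST t. \<exists>w a b. w \<in> omega_pows p \<and> a \<in> vecs N \<and> b \<in> vecs N
      \<and> E = err_op p r N w a b \<and> t = card {j. j < N \<and> (a j, b j) \<noteq> (0, 0)})"

definition states :: "nat \<Rightarrow> 'a::zero state set" where
  "states N = {\<psi>. \<forall>x. x \<notin> vecs N \<longrightarrow> \<psi> x = 0}"

definition stabilizer_group :: "nat \<Rightarrow> nat \<Rightarrow> nat \<Rightarrow> 'a::field state set \<Rightarrow> ('a state \<Rightarrow> 'a state) set" where
  "stabilizer_group p r N Q = {E \<in> pauli p r N. \<forall>v\<in>Q. E v = v}"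

definition centralizer :: "('a state \<Rightarrow> 'a state) set \<Rightarrow> ('a state \<Rightarrow> 'a state) set \<Rightarrow> ('a state \<Rightarrow> 'a state) set" where
  "centralizer P S = {E \<in> P. \<forall>s\<in>S. E \<circ> s = s \<circ> E}"

definition scalar_elems :: "nat \<Rightarrow> nat \<Rightarrow> nat \<Rightarrow> ('a::field state \<Rightarrow> 'a state) set" where
  "scalar_elems p r N = {E \<in> pauli p r N. \<exists>w. \<forall>\<psi>\<in>states N. E \<psi> = (\<lambda>x. w * \<psi> x)}"

definition qdist :: "nat \<Rightarrow> nat \<Rightarrow> nat \<Rightarrow> 'a::field state set \<Rightarrow> nat" where
  "qdist p r N Q = Min (err_wt p r N `
      (centralizer (pauli p r N) (stabilizer_group p r N Q)
        - {E \<circ> Z | E Z. E \<in> stabilizer_group p r N Q \<and> Z \<in> scalar_elems p r N}))"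

end

theory Submission
  imports Defs "HOL-Computational_Algebra.Computational_Algebra" "HOL-Number_Theory.Cong"
begin

locale cor35 =
  fixes C :: "(nat \<Rightarrow> 'a::{finite,field}) set"
    and \<kappa> :: "'b::{finite,field} \<Rightarrow> (nat \<Rightarrow> 'a) \<Rightarrow> nat"
    and p r n k m :: nat
  assumes prime: "prime p" and r1: "r \<ge> 1" and cardA: "CARD('a) = p ^ r"
    and lc: "linear_code n C" and dimC: "code_dim C = k" and k1: "1 \<le> k" and kn: "k < n"
    and m2: "m \<ge> 2"
    and cardB: "CARD('b) = CARD('a) ^ k"
    and iso: "Fp_lin_iso p C \<kappa>"
begin

lemma p2: "p \<ge> 2" using prime prime_ge_2_nat by blast

lemma CHAR_a: "CHAR('a) = p"
proof -
  have pos: "CHAR('a) > 0" by (rule finite_imp_CHAR_pos) simp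
  have pr: "prime CHAR('a)" using prime_CHAR_semidom[OF pos] .
  have "(\<Sum>y\<in>(UNIV::'a set). y + 1) = (\<Sum>y\<in>UNIV. y)"
    by (rule sum.reindex_bij_witness[of _ "\<lambda>y. y - 1" "\<lambda>y. y + 1"]) auto
  hence "(of_nat CARD('a) :: 'a) = 0" by (simp add: sum.distrib)
  hence "CHAR('a) dvd p" using cardA pr r1 by (simp add: of_nat_eq_0_iff_char_dvd)
  moreover from prime have "\<forall>m. m dvd p \<longrightarrow> m = 1 \<or> m = p" by (simp add: prime_nat_iff)
  ultimately have "CHAR('a) = 1 \<or> CHAR('a) = p" by blast
  thus ?thesis using pr by (auto simp: not_prime_1)
qed

lemma ofnat_eq: "(of_nat x :: 'a) = of_nat y \<longleftrightarrow> x mod p = y mod p"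
  using of_nat_eq_iff_cong_CHAR[of x y, where 'a='a] CHAR_a unfolding cong_def by simp

lemma ofnat_inj: "x < p \<Longrightarrow> y < p \<Longrightarrow> (of_nat x :: 'a) = of_nat y \<Longrightarrow> x = y"
  using ofnat_eq by simp

lemma ofnat_mod: "(of_nat (x mod p) :: 'a) = of_nat x"
  using ofnat_eq by simp

lemma pow_card: "(x::'a) ^ (p ^ r) = x"
proof (cases "x = 0")
  case False
  have "x * (\<Prod>y\<in>UNIV-{0}. x * y) = x * x ^ (card (UNIV :: 'a set) - 1) * \<Prod>(UNIV-{0})"
    by (simp add: prod.distrib mult_ac)
  also have "x * x ^ (card (UNIV :: 'a set) - 1) = x ^ Suc (card (UNIV :: 'a set) - 1)"
    by (subst power_Suc) auto
  also have "Suc (card (UNIV :: 'a set) - 1) = card (UNIV :: 'a set)"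
    using finite_UNIV_card_ge_0[where ?'a = 'a] by simp
  also have "(\<Prod>y\<in>UNIV-{0}. x * y) = (\<Prod>y\<in>UNIV-{0}. y)"
    by (rule prod.reindex_bij_witness[of _ "\<lambda>y. y / x" "\<lambda>y. x * y"]) (use False in auto)
  finally show ?thesis
    using cardA by simp
qed (use prime in \<open>auto simp: prime_gt_0_nat\<close>)

lemma frob: "((x::'a) + y) ^ (p ^ i) = x ^ (p ^ i) + y ^ (p ^ i)"
  by (rule freshmans_dream') (simp_all add: CHAR_a prime)

lemma frob1: "((x::'a) + y) ^ p = x ^ p + y ^ p"
  using frob[of x y 1] by simp

lemma ftrace_add: "ftrace p r ((x::'a) + y) = ftrace p r x + ftrace p r y"
  unfolding ftrace_def by (simp add: frob sum.distrib)

lemma ftrace_0: "ftrace p r (0::'a) = 0"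
  unfolding ftrace_def using prime by (simp add: prime_gt_0_nat power_0_left)

lemma ftrace_minus: "ftrace p r (-(x::'a)) = - ftrace p r x"
  using ftrace_add[of x "-x"] ftrace_0 by (simp add: eq_neg_iff_add_eq_0 add.commute)

lemma ftrace_diff: "ftrace p r ((x::'a) - y) = ftrace p r x - ftrace p r y"
  using ftrace_add[of x "-y"] ftrace_minus[of y] by simp

lemma ftrace_pow: "(ftrace p r (x::'a)) ^ p = ftrace p r x"
proof -
  obtain r' where r: "r = Suc r'" using r1 by (cases r) auto
  have "(ftrace p r x) ^ p = (\<Sum>i<r. (x ^ (p ^ i)) ^ p)"
    unfolding ftrace_def by (rule freshmans_dream_sum) (simp_all add: CHAR_a prime)
  also have "\<dots> = (\<Sum>i<r. x ^ (p ^ Suc i))"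
    by (simp add: power_mult[symmetric] mult.commute)
  also have "\<dots> = (\<Sum>i<r'. x ^ (p ^ Suc i)) + x ^ (p ^ r)"
    unfolding r by simp
  also have "x ^ (p ^ r) = x ^ (p ^ 0)" using pow_card by simp
  also have "(\<Sum>i<r'. x ^ (p ^ Suc i)) + x ^ (p ^ 0) = ftrace p r x"
    unfolding ftrace_def r by (subst sum.lessThan_Suc_shift) simp
  finally show ?thesis .
qed

lemma fermat_ofnat: "(of_nat j :: 'a) ^ p = of_nat j"
proof (induction j)
  case 0 then show ?case using p2 by simp
next
  case (Suc j)
  have "(of_nat (Suc j) :: 'a) ^ p = (1 + of_nat j) ^ p" by simp
  also have "\<dots> = 1 + of_nat j" using frob1[of 1 "of_nat j"] Suc by simp
  finally show ?case by simp
qed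

lemma fixed_prime:
  assumes "(y::'a) ^ p = y" shows "\<exists>j<p. y = of_nat j"
proof -
  define P :: "'a poly" where "P = monom 1 p - [:0,1:]"
  have polyP: "poly P z = z ^ p - z" for z by (simp add: P_def poly_monom)
  obtain q where pq: "p = Suc (Suc q)" using p2 by (metis add_2_eq_Suc le_Suc_ex)
  have "coeff P p = 1" by (simp add: P_def coeff_monom pq)
  hence P0: "P \<noteq> 0" by auto
  have "degree P \<le> p"
    unfolding P_def by (rule degree_le) (use p2 in \<open>auto simp: coeff_monom coeff_pCons split: nat.splits\<close>)
  hence cardR: "card {z. poly P z = 0} \<le> p" using card_poly_roots_bound[OF P0] by simp
  have sub: "(of_nat ` {..<p} :: 'a set) \<subseteq> {z. poly P z = 0}"
    using fermat_ofnat by (auto simp: polyP)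
  have "inj_on (of_nat :: nat \<Rightarrow> 'a) {..<p}" by (auto intro!: inj_onI ofnat_inj)
  hence cS: "card (of_nat ` {..<p} :: 'a set) = p" by (simp add: card_image)
  have "(of_nat ` {..<p} :: 'a set) = {z. poly P z = 0}"
    by (rule card_seteq) (use sub cardR cS in auto)
  moreover have "y \<in> {z. poly P z = 0}" using assms by (simp add: polyP)
  ultimately show ?thesis by auto
qed

lemma tr_prop: "tr p r (x::'a) < p \<and> of_nat (tr p r x) = ftrace p r x"
proof -
  obtain j where j: "j < p" "ftrace p r x = of_nat j" using fixed_prime[OF ftrace_pow] by blast
  have "tr p r x = j"
    unfolding tr_def
    by (rule the1_equality) (use j ofnat_inj in auto)
  thus ?thesis using j by simp
qed

lemma tr_lt: "tr p r (x::'a) < p" using tr_prop by blast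
lemma tr_of: "(of_nat (tr p r x) :: 'a) = ftrace p r x" using tr_prop by blast

lemma tr_add: "tr p r ((x::'a) + y) = (tr p r x + tr p r y) mod p"
proof (rule ofnat_inj)
  show "tr p r (x + y) < p" by (rule tr_lt)
  show "(tr p r x + tr p r y) mod p < p" using p2 by simp
  show "(of_nat (tr p r (x + y)) :: 'a) = of_nat ((tr p r x + tr p r y) mod p)"
    by (simp only: ofnat_mod) (simp add: tr_of ftrace_add)
qed

lemma tr_zero_iff: "tr p r (x::'a) = 0 \<longleftrightarrow> ftrace p r x = 0"
proof
  assume "tr p r x = 0" thus "ftrace p r x = 0" using tr_of[of x] by simp
next
  assume "ftrace p r x = 0"
  hence "(of_nat (tr p r x) :: 'a) = of_nat 0" using tr_of[of x] by simp
  thus "tr p r x = 0" using ofnat_inj[OF tr_lt] p2 by simp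
qed

lemma ftrace_ofnat_mult: "ftrace p r (of_nat a * (x::'a)) = of_nat a * ftrace p r x"
  by (induction a) (simp_all add: distrib_right ftrace_add ftrace_0)

lemma tr_ofnat_mult: "tr p r (of_nat a * (x::'a)) = (a * tr p r x) mod p"
proof (rule ofnat_inj)
  show "tr p r (of_nat a * x) < p" by (rule tr_lt)
  show "(a * tr p r x) mod p < p" using p2 by simp
  show "(of_nat (tr p r (of_nat a * x)) :: 'a) = of_nat ((a * tr p r x) mod p)"
    by (simp only: ofnat_mod) (simp add: tr_of ftrace_ofnat_mult)
qed

lemma nondeg: "\<exists>x::'a. ftrace p r x \<noteq> 0"
proof (rule ccontr)
  assume "\<not> ?thesis"
  hence all0: "ftrace p r (x::'a) = 0" for x by blast
  define P :: "'a poly" where "P = (\<Sum>i<r. monom 1 (p ^ i))"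
  have polyP: "poly P z = ftrace p r z" for z by (simp add: P_def poly_sum poly_monom ftrace_def)
  have pinj: "p ^ i = p ^ j \<longleftrightarrow> i = j" for i j using p2 by (simp add: power_inject_exp)
  have cP: "coeff P j = (\<Sum>i<r. if p ^ i = j then 1 else 0)" for j
    by (simp add: P_def coeff_sum coeff_monom)
  have "coeff P (p ^ (r - 1)) = 1"
    unfolding cP pinj using r1 by (simp add: sum.delta)
  hence P0: "P \<noteq> 0" by auto
  have "degree P \<le> p ^ (r - 1)"
  proof (rule degree_le, intro allI impI)
    fix j assume j: "p ^ (r - 1) < j"
    have "p ^ i \<noteq> j" if "i < r" for i
    proof -
      have "p ^ i \<le> p ^ (r - 1)" using that p2 by (intro power_increasing) auto
      thus ?thesis using j by auto
    qed
    thus "coeff P j = 0" unfolding cP by simp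
  qed
  hence "card {z. poly P z = 0} \<le> p ^ (r - 1)" using card_poly_roots_bound[OF P0] by simp
  moreover have "{z. poly P z = 0} = (UNIV :: 'a set)" using all0 polyP by auto
  ultimately have "p ^ r \<le> p ^ (r - 1)" using cardA by simp
  moreover have "p ^ (r - 1) < p ^ r" using p2 r1 by (intro power_strict_increasing) auto
  ultimately show False by simp
qed

lemma nondeg2: assumes "\<And>\<beta>::'a. ftrace p r (\<beta> * s) = 0" shows "s = 0"
proof (rule ccontr)
  assume s: "s \<noteq> 0"
  obtain x0 :: 'a where x0: "ftrace p r x0 \<noteq> 0" using nondeg by blast
  have "ftrace p r ((x0 / s) * s) = 0" by (rule assms)
  thus False using s x0 by simp
qed

lemma zeta_pow: "zeta p ^ a = cis (real a * (2 * pi / real p))"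
  unfolding zeta_def by (rule Complex.DeMoivre)

lemma zeta_pow_p: "zeta p ^ p = 1"
  unfolding zeta_pow using p2 by simp

lemma zeta_pow_mod: "zeta p ^ a = zeta p ^ (a mod p)"
proof -
  have "zeta p ^ a = zeta p ^ (p * (a div p) + a mod p)" by simp
  also have "\<dots> = zeta p ^ (a mod p)" by (simp only: power_add power_mult zeta_pow_p) simp
  finally show ?thesis .
qed

lemma zeta_pow_eq1: assumes "t < p" "zeta p ^ t = 1" shows "t = 0"
proof -
  have "cos (real t * (2 * pi / real p)) = 1"
    using assms(2) unfolding zeta_pow by (metis cis.sel(1) one_complex.sel(1))
  then obtain z :: int where z: "real t * (2 * pi / real p) = real_of_int z * 2 * pi"
    using cos_one_2pi_int by blast
  have pp: "real p > 0" using p2 by simp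
  from z have "real t / real p = real_of_int z" using pp by (simp add: field_simps)
  moreover have "0 \<le> real t / real p" "real t / real p < 1" using assms(1) p2 by auto
  ultimately have "z = 0" by linarith
  thus "t = 0" using z p2 by simp
qed

lemma zeta_nz: "zeta p \<noteq> 0" unfolding zeta_def by (simp add: cis_neq_zero)

definition chi :: "'a \<Rightarrow> complex" where "chi x = zeta p ^ tr p r x"

lemma chi_add: "chi (x + y) = chi x * chi y"
  unfolding chi_def tr_add by (metis zeta_pow_mod power_add)

lemma chi_0: "chi 0 = 1"
proof -
  have "tr p r (0::'a) = 0" using tr_zero_iff ftrace_0 by simp
  thus ?thesis unfolding chi_def by simp
qed

lemma chi_1_iff: "chi x = 1 \<longleftrightarrow> ftrace p r x = 0"
  unfolding chi_def using zeta_pow_eq1[OF tr_lt] tr_zero_iff by (metis power_0)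

lemma chi_nz: "chi x \<noteq> 0" unfolding chi_def using zeta_nz by simp

lemma chi_sum: "finite A \<Longrightarrow> (\<Prod>j\<in>A. chi (f j)) = chi (\<Sum>j\<in>A. f j)"
  by (induction A rule: finite_induct) (simp_all add: chi_0 chi_add)

lemma chi_diff: "chi (x - y) * chi y = chi x"
  using chi_add[of "x - y" y] by simp

end


lemma fun_sum_apply: "(sum g A) x = sum (\<lambda>t. g t x) A"
  by (induction A rule: infinite_finite_induct) auto

lemma vs_fscale: "vector_space (fscale :: 'a::field \<Rightarrow> (nat \<Rightarrow> 'a) \<Rightarrow> (nat \<Rightarrow> 'a))"
  by unfold_locales (simp_all add: fscale_def fun_eq_iff algebra_simps)

interpretation fs: vector_space "fscale :: 'a::field \<Rightarrow> (nat \<Rightarrow> 'a) \<Rightarrow> (nat \<Rightarrow> 'a)"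
  by (rule vs_fscale)

interpretation fsp: vector_space_pair "fscale :: 'a::field \<Rightarrow> (nat \<Rightarrow> 'a) \<Rightarrow> (nat \<Rightarrow> 'a)" "(*) :: 'a \<Rightarrow> 'a \<Rightarrow> 'a"
  by unfold_locales (simp_all add: fscale_def fun_eq_iff algebra_simps)

definition ip :: "nat \<Rightarrow> (nat \<Rightarrow> 'a::field) \<Rightarrow> (nat \<Rightarrow> 'a) \<Rightarrow> 'a" where
  "ip N v x = (\<Sum>j<N. v j * x j)"

lemma ip_add_right: "ip N v (x + y) = ip N v x + ip N v y"
  unfolding ip_def by (simp add: sum.distrib distrib_left)
lemma ip_add_left: "ip N (v + w) x = ip N v x + ip N w x"
  unfolding ip_def by (simp add: sum.distrib distrib_right)
lemma ip_diff_right: "ip N v (x - y) = ip N v x - ip N v y"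
  unfolding ip_def by (simp add: sum_subtractf right_diff_distrib)
lemma ip_diff_left: "ip N (v - w) x = ip N v x - ip N w x"
  unfolding ip_def by (simp add: sum_subtractf left_diff_distrib)
lemma ip_zero_right[simp]: "ip N v 0 = 0" unfolding ip_def by simp
lemma ip_zero_left[simp]: "ip N 0 x = 0" unfolding ip_def by simp
lemma ip_scale_right: "ip N v (fscale c x) = c * ip N v x"
  unfolding ip_def fscale_def by (simp add: sum_distrib_left mult_ac)
lemma ip_scale_left: "ip N (fscale c v) x = c * ip N v x"
  unfolding ip_def fscale_def by (simp add: sum_distrib_left mult_ac)
lemma ip_comm: "ip N v x = ip N x v"
  unfolding ip_def by (simp add: mult.commute)

lemma vecs_add: "(x::nat\<Rightarrow>'a::ab_group_add) \<in> vecs N \<Longrightarrow> y \<in> vecs N \<Longrightarrow> x + y \<in> vecs N"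
  unfolding vecs_def by simp
lemma vecs_diff: "(x::nat\<Rightarrow>'a::ab_group_add) \<in> vecs N \<Longrightarrow> y \<in> vecs N \<Longrightarrow> x - y \<in> vecs N"
  unfolding vecs_def by simp
lemma vecs_0[simp]: "(0::nat\<Rightarrow>'a::zero) \<in> vecs N" unfolding vecs_def by simp
lemma vecs_scale: "(x::nat\<Rightarrow>'a::field) \<in> vecs N \<Longrightarrow> fscale c x \<in> vecs N"
  unfolding vecs_def fscale_def by simp

lemma sum_blocks: "(\<Sum>j<n * m. (g::nat\<Rightarrow>'a::comm_monoid_add) j) = (\<Sum>i<m. \<Sum>t<n. g (i * n + t))"
proof -
  have "(\<Sum>j<n * m. g j) = (\<Sum>i<m. sum g {i * n..<i * n + n})"
    using sum.nat_group[of g n m] by (simp add: mult.commute)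
  also have "\<dots> = (\<Sum>i<m. \<Sum>t<n. g (i * n + t))"
  proof (rule sum.cong[OF refl])
    fix i show "sum g {i * n..<i * n + n} = (\<Sum>t<n. g (i * n + t))"
      by (rule sum.reindex_bij_witness[of _ "\<lambda>t. i * n + t" "\<lambda>j. j - i * n"]) auto
  qed
  finally show ?thesis .
qed

lemma block_add: "block n i ((x::nat\<Rightarrow>'a::ab_group_add) + y) = block n i x + block n i y"
  unfolding block_def by auto
lemma block_diff: "block n i ((x::nat\<Rightarrow>'a::ab_group_add) - y) = block n i x - block n i y"
  unfolding block_def by auto
lemma block_0[simp]: "block n i (0::nat\<Rightarrow>'a::zero) = 0"
  unfolding block_def by auto
lemma block_vecs: "block n i x \<in> vecs n"
  unfolding block_def vecs_def by auto

lemma ip_blocks: "ip (n * m) v x = (\<Sum>i<m. ip n (block n i v) (block n i x))"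
  unfolding ip_def sum_blocks block_def by simp

definition emb :: "nat \<Rightarrow> nat \<Rightarrow> (nat \<Rightarrow> 'a::zero) \<Rightarrow> nat \<Rightarrow> 'a" where
  "emb n i v = (\<lambda>j. if i * n \<le> j \<and> j < i * n + n then v (j - i * n) else 0)"

lemma idx_eq:
  fixes t n i i' :: nat
  assumes "t < n" "i * n \<le> i' * n + t" "i' * n + t < i * n + n"
  shows "i' = i"
proof -
  have "n > 0" using assms by auto
  have "i' < i + 1"
  proof (rule ccontr)
    assume "\<not> i' < i + 1"
    hence "(i + 1) * n \<le> i' * n" by (intro mult_le_mono1) auto
    thus False using assms by simp
  qed
  moreover have "i < i' + 1"
  proof (rule ccontr)
    assume "\<not> i < i' + 1"
    hence "(i' + 1) * n \<le> i * n" by (intro mult_le_mono1) auto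
    thus False using assms by simp
  qed
  ultimately show ?thesis by simp
qed

lemma block_emb: "(u::nat\<Rightarrow>'a::zero) \<in> vecs n \<Longrightarrow> block n i' (emb n i u) = (if i' = i then u else 0)"
  unfolding block_def emb_def vecs_def by (auto simp: fun_eq_iff dest: idx_eq)

lemma emb_vecs: "i < m \<Longrightarrow> emb n i u \<in> vecs (n * m)"
proof -
  assume "i < m"
  hence "i * n + n \<le> n * m" using mult_le_mono1[of "Suc i" m n] by (simp add: mult.commute)
  thus ?thesis unfolding emb_def vecs_def by auto
qed

lemma ip_emb_right: "u \<in> vecs n \<Longrightarrow> i < m \<Longrightarrow> ip (n * m) v (emb n i u) = ip n (block n i v) u"
  unfolding ip_blocks by (simp add: block_emb if_distrib[of "ip n _"] cong: if_cong)

lemma ip_emb_left: "u \<in> vecs n \<Longrightarrow> i < m \<Longrightarrow> ip (n * m) (emb n i u) x = ip n u (block n i x)"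
  using ip_emb_right[where v=x] ip_comm[of "n*m" "emb n i u" x] ip_comm[of n u "block n i x"] by simp

lemma emb_add: "emb n i ((u::nat\<Rightarrow>'a::ab_group_add) + v) = emb n i u + emb n i v"
  unfolding emb_def by auto
lemma emb_scale: "emb n i (fscale (c::'a::field) u) = fscale c (emb n i u)"
  unfolding emb_def fscale_def by auto

context cor35 begin

lemma C_vecs: "C \<subseteq> vecs n" using lc unfolding linear_code_def by blast
lemma C_sub: "fs.subspace C" using lc unfolding linear_code_def by blast
lemma C_0: "0 \<in> C" using fs.subspace_0[OF C_sub] .
lemma C_add: "x \<in> C \<Longrightarrow> y \<in> C \<Longrightarrow> x + y \<in> C" using fs.subspace_add[OF C_sub] .
lemma C_diff: "x \<in> C \<Longrightarrow> y \<in> C \<Longrightarrow> x - y \<in> C" using fs.subspace_diff[OF C_sub] .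
lemma C_scale: "x \<in> C \<Longrightarrow> fscale c x \<in> C" using fs.subspace_scale[OF C_sub] .
lemma C_sum: "(\<And>i. i \<in> A \<Longrightarrow> f i \<in> C) \<Longrightarrow> sum f A \<in> C" using fs.subspace_sum[OF C_sub] .

lemma C_nonzero: "\<exists>c\<in>C. c \<noteq> 0"
proof (rule ccontr)
  assume "\<not> ?thesis"
  hence "C = {0}" using C_0 by auto
  moreover have "fs.dim ({0} :: (nat \<Rightarrow> 'a) set) = 0"
    using fs.dim_eq_card[of "{}" "{0}"] fs.independent_empty fs.span_insert_0[of "{}"] by simp
  ultimately show False using dimC k1 unfolding code_dim_def by simp
qed

lemma double_dual:
  assumes v: "v \<in> vecs n" and orth: "\<And>d. d \<in> dual_code n C \<Longrightarrow> ip n d v = 0"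
  shows "v \<in> C"
proof (rule ccontr)
  assume vC: "v \<notin> C"
  obtain B where B: "B \<subseteq> C" "fs.independent B" "C \<subseteq> fs.span B"
    using fs.maximal_independent_subset[of C] by blast
  have spanB: "fs.span B \<subseteq> C" using fs.span_minimal[OF B(1) C_sub] .
  hence vB: "v \<notin> fs.span B" using vC by blast
  have ind: "fs.independent (insert v B)" using fs.independent_insertI[OF vB B(2)] .
  define f where "f = fsp.construct (insert v B) (\<lambda>x. if x = v then (1::'a) else 0)"
  have lin: "Vector_Spaces.linear fscale (*) f" unfolding f_def by (rule fsp.linear_construct[OF ind])
  have fv: "f v = 1" unfolding f_def by (subst fsp.construct_basis[OF ind]) auto
  have fB: "f b = 0" if "b \<in> B" for b
    unfolding f_def using that vC B(1) by (subst fsp.construct_basis[OF ind]) auto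
  have fC: "f c = 0" if "c \<in> C" for c
    using fsp.linear_eq_0_on_span[OF lin, of B c] fB B(3) that by blast
  define e :: "nat \<Rightarrow> nat \<Rightarrow> 'a" where "e t = (\<lambda>j. if j = t then 1 else 0)" for t
  define d where "d = (\<lambda>t. if t < n then f (e t) else 0)"
  have dec: "x = (\<Sum>t<n. fscale (x t) (e t))" if "x \<in> vecs n" for x
  proof
    fix j
    show "x j = (\<Sum>t<n. fscale (x t) (e t)) j"
      unfolding fun_sum_apply fscale_def e_def using that unfolding vecs_def
      by (cases "j < n") (auto simp: if_distrib cong: if_cong)
  qed
  have fx: "f x = ip n d x" if "x \<in> vecs n" for x
  proof -
    have "f x = f (\<Sum>t<n. fscale (x t) (e t))" using dec[OF that] by simp
    also have "\<dots> = (\<Sum>t<n. x t * f (e t))"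
      by (simp add: fsp.linear_sum[OF lin] fsp.linear_scale[OF lin])
    also have "\<dots> = ip n d x" unfolding ip_def d_def by (simp add: mult.commute)
    finally show ?thesis .
  qed
  have "d \<in> dual_code n C"
    unfolding dual_code_def
  proof (intro CollectI conjI ballI)
    show "d \<in> vecs n" unfolding vecs_def d_def by simp
    fix c assume "c \<in> C"
    hence "ip n d c = 0" using fx[of c] fC[of c] C_vecs by auto
    thus "(\<Sum>i<n. d i * c i) = 0" unfolding ip_def .
  qed
  hence "ip n d v = 0" by (rule orth)
  thus False using fx[OF v] fv by simp
qed

end


context cor35 begin

definition V :: "(nat \<Rightarrow> 'a) set" where "V = {x \<in> vecs (n * m). \<forall>i<m. block n i x \<in> C}"
definition bsum :: "(nat \<Rightarrow> 'a) \<Rightarrow> nat \<Rightarrow> 'a" where "bsum x = (\<lambda>j. \<Sum>i<m. block n i x j)"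
definition dg :: "'b \<Rightarrow> nat \<Rightarrow> 'b" where "dg l = (\<lambda>i. if i < m then l else 0)"
definition psi :: "'b \<Rightarrow> (nat \<Rightarrow> 'a) \<Rightarrow> complex" where "psi l c = zeta p ^ \<kappa> l c"
definition K :: complex where "K = (complex_of_real (real CARD('a) powr (- real k / 2))) ^ m"

lemma K_nz: "K \<noteq> 0" unfolding K_def by simp

lemma bsum_fun: "bsum x = (\<Sum>i<m. block n i x)"
  unfolding bsum_def by (simp add: fun_eq_iff fun_sum_apply)
lemma bsum_add: "bsum (x + y) = bsum x + bsum y"
  unfolding bsum_fun block_add by (simp add: sum.distrib)
lemma bsum_diff: "bsum (x - y) = bsum x - bsum y"
  unfolding bsum_fun block_diff by (simp add: sum_subtractf)
lemma bsum_0[simp]: "bsum 0 = 0"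
  unfolding bsum_fun by simp
lemma bsum_emb: "u \<in> vecs n \<Longrightarrow> i < m \<Longrightarrow> bsum (emb n i u) = u"
  unfolding bsum_fun by (simp add: block_emb if_distrib cong: if_cong)

lemma V_vecs: "x \<in> V \<Longrightarrow> x \<in> vecs (n * m)" unfolding V_def by simp
lemma V_block: "x \<in> V \<Longrightarrow> i < m \<Longrightarrow> block n i x \<in> C" unfolding V_def by simp
lemma V_0: "0 \<in> V" unfolding V_def using C_0 by simp
lemma V_add: "x \<in> V \<Longrightarrow> y \<in> V \<Longrightarrow> x + y \<in> V"
  unfolding V_def by (auto simp: block_add intro: vecs_add C_add)
lemma V_diff: "x \<in> V \<Longrightarrow> y \<in> V \<Longrightarrow> x - y \<in> V"
  unfolding V_def by (auto simp: block_diff intro: vecs_diff C_diff)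
lemma V_emb: "u \<in> C \<Longrightarrow> i < m \<Longrightarrow> emb n i u \<in> V"
  unfolding V_def using C_vecs C_0 by (auto simp: block_emb emb_vecs)
lemma bsum_C: "x \<in> V \<Longrightarrow> bsum x \<in> C"
  unfolding bsum_fun by (rule C_sum) (simp add: V_block)

lemma kappa_lf: "\<kappa> l \<in> lin_functionals p C"
  using iso unfolding Fp_lin_iso_def bij_betw_def by blast
lemma kappa_surj: "f \<in> lin_functionals p C \<Longrightarrow> \<exists>l. \<kappa> l = f"
  using iso unfolding Fp_lin_iso_def bij_betw_def by (metis imageE)

lemma lf_add: "f \<in> lin_functionals p C \<Longrightarrow> c \<in> C \<Longrightarrow> c' \<in> C \<Longrightarrow> f (c + c') = (f c + f c') mod p"
  unfolding lin_functionals_def plus_fun_def by blast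
lemma lf_lt: "f \<in> lin_functionals p C \<Longrightarrow> c \<in> C \<Longrightarrow> f c < p"
  unfolding lin_functionals_def by blast
lemma lf_zero: assumes "f \<in> lin_functionals p C" shows "f 0 = 0"
proof -
  have "f (0 + 0) = (f 0 + f 0) mod p" using lf_add[OF assms C_0 C_0] .
  hence "f 0 = (f 0 + f 0) mod p" by simp
  moreover have "f 0 < p" using lf_lt[OF assms C_0] .
  ultimately show ?thesis
    by (cases "f 0 + f 0 < p") (auto simp: le_mod_geq)
qed

lemma psi_add: "c \<in> C \<Longrightarrow> c' \<in> C \<Longrightarrow> psi l (c + c') = psi l c * psi l c'"
  unfolding psi_def using lf_add[OF kappa_lf] by (metis zeta_pow_mod power_add)
lemma psi_0: "psi l 0 = 1"
  unfolding psi_def using lf_zero[OF kappa_lf] by simp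
lemma psi_sum: "finite A \<Longrightarrow> (\<And>i. i \<in> A \<Longrightarrow> f i \<in> C) \<Longrightarrow> (\<Prod>i\<in>A. psi l (f i)) = psi l (\<Sum>i\<in>A. f i)"
proof (induction A rule: finite_induct)
  case empty then show ?case by (simp only: prod.empty sum.empty psi_0)
next
  case (insert x F)
  have fF: "(\<Sum>i\<in>F. f i) \<in> C" using insert by (intro C_sum) auto
  have "(\<Prod>i\<in>insert x F. psi l (f i)) = psi l (f x) * (\<Prod>i\<in>F. psi l (f i))"
    by (rule prod.insert) (use insert in auto)
  also have "\<dots> = psi l (f x) * psi l (\<Sum>i\<in>F. f i)" using insert by simp
  also have "\<dots> = psi l (f x + (\<Sum>i\<in>F. f i))" by (rule psi_add[symmetric]) (use insert fF in auto)
  also have "f x + (\<Sum>i\<in>F. f i) = (\<Sum>i\<in>insert x F. f i)" by (rule sum.insert[symmetric]) (use insert in auto)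
  finally show ?case .
qed
lemma psi_1_iff: "c \<in> C \<Longrightarrow> psi l c = 1 \<longleftrightarrow> \<kappa> l c = 0"
  unfolding psi_def using zeta_pow_eq1[OF lf_lt[OF kappa_lf]] by (metis power_0)

lemma Phi_dg: "Phi p n m k C \<kappa> (dg l) x = (if x \<in> V then K * psi l (bsum x) else 0)"
proof (cases "x \<in> V")
  case True
  have "Phi p n m k C \<kappa> (dg l) x = (\<Prod>i<m. complex_of_real (real CARD('a) powr (- real k / 2)) * psi l (block n i x))"
    using True unfolding Phi_def phi_def V_def dg_def psi_def by (auto intro!: prod.cong)
  also have "\<dots> = K * psi l (bsum x)"
    unfolding prod.distrib K_def bsum_fun using True psi_sum[of "{..<m}" "\<lambda>i. block n i x" l] V_block by simp
  finally show ?thesis using True by simp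
next
  case False
  show ?thesis
  proof (cases "x \<in> vecs (n * m)")
    case True
    then obtain i where i: "i < m" "block n i x \<notin> C" using False unfolding V_def by auto
    have "(\<Prod>i<m. phi p k C \<kappa> (dg l i) (block n i x)) = 0"
      by (rule prod_zero) (use i in \<open>auto simp: phi_def\<close>)
    thus ?thesis using False True unfolding Phi_def by simp
  qed (use False in \<open>simp add: Phi_def V_def\<close>)
qed

lemma sep_functional:
  assumes s: "s \<in> C" "s \<noteq> 0" shows "\<exists>f\<in>lin_functionals p C. f s \<noteq> 0"
proof -
  obtain j where j: "s j \<noteq> 0" using s(2) unfolding zero_fun_def fun_eq_iff by auto
  obtain x0 :: 'a where x0: "ftrace p r x0 \<noteq> 0" using nondeg by blast
  define \<beta> where "\<beta> = x0 / s j"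
  define f where "f = (\<lambda>c. if c \<in> C then tr p r (\<beta> * c j) else 0)"
  have "f \<in> lin_functionals p C"
    unfolding lin_functionals_def
  proof (intro CollectI conjI ballI allI impI)
    fix c assume "c \<in> C" thus "f c < p" unfolding f_def by (simp add: tr_lt)
  next
    fix c c' assume cc: "c \<in> C" "c' \<in> C"
    hence "(\<lambda>i. c i + c' i) \<in> C" using C_add[of c c'] by (simp add: plus_fun_def)
    thus "f (\<lambda>i. c i + c' i) = (f c + f c') mod p" unfolding f_def using cc
      by (simp add: distrib_left tr_add)
  next
    fix a c assume ac: "a < p" "c \<in> C"
    hence "fscale (of_nat a) c \<in> C" by (simp add: C_scale)
    thus "f (fscale (of_nat a) c) = (a * f c) mod p" unfolding f_def using ac
      by (simp add: fscale_def tr_ofnat_mult[symmetric] mult.left_commute)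
  next
    fix c assume "c \<notin> C" thus "f c = 0" unfolding f_def by simp
  qed
  moreover have "f s \<noteq> 0" unfolding f_def \<beta>_def using s j x0 by (simp add: tr_zero_iff)
  ultimately show ?thesis by blast
qed

lemma kappa_sep: "s \<in> C \<Longrightarrow> (\<And>l. \<kappa> l s = 0) \<Longrightarrow> s = 0"
  using sep_functional kappa_surj by metis

abbreviation Q where "Q \<equiv> code_space p n m k C \<kappa>"

lemma diag_dg: "diag m = range dg" unfolding diag_def dg_def by auto

lemma Q_form: "\<psi> \<in> Q \<Longrightarrow> \<exists>a. \<psi> = (\<lambda>x. \<Sum>v\<in>Phi p n m k C \<kappa> ` diag m. a v * v x)"
  unfolding code_space_def cspan_def by blast

lemma finite_gens: "finite (Phi p n m k C \<kappa> ` diag m)"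
  unfolding diag_dg by simp

lemma Phi_in_Q: "Phi p n m k C \<kappa> (dg l) \<in> Q"
proof -
  let ?G = "Phi p n m k C \<kappa> ` diag m"
  let ?v = "Phi p n m k C \<kappa> (dg l)"
  have v: "?v \<in> ?G" unfolding diag_dg by simp
  have "(\<Sum>w\<in>?G. (if w = ?v then 1 else 0) * w x) = ?v x" for x
  proof -
    have "(\<Sum>w\<in>?G. (if w = ?v then 1 else 0) * w x) = (\<Sum>w\<in>?G. if w = ?v then ?v x else 0)"
      by (rule sum.cong) auto
    also have "\<dots> = ?v x" using sum.delta[OF finite_gens, of ?v "\<lambda>_. ?v x"] v by simp
    finally show ?thesis .
  qed
  hence "?v = (\<lambda>x. \<Sum>w\<in>?G. (if w = ?v then 1 else 0) * w x)" by simp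
  thus ?thesis unfolding code_space_def cspan_def mem_Collect_eq by (rule exI[of _ "\<lambda>w. if w = ?v then 1 else 0"])
qed

lemma Phi_states: "Phi p n m k C \<kappa> \<Lambda> y = 0" if "y \<notin> vecs (n * m)"
  using that unfolding Phi_def by simp

lemma Q_states: "\<psi> \<in> Q \<Longrightarrow> y \<notin> vecs (n * m) \<Longrightarrow> \<psi> y = 0"
proof -
  assume "\<psi> \<in> Q" "y \<notin> vecs (n * m)"
  then obtain a where "\<psi> = (\<lambda>x. \<Sum>v\<in>Phi p n m k C \<kappa> ` diag m. a v * v x)" using Q_form by blast
  moreover have "v y = 0" if "v \<in> Phi p n m k C \<kappa> ` diag m" for v
    using that Phi_states[OF \<open>y \<notin> vecs (n * m)\<close>] by auto
  ultimately show ?thesis by (auto intro!: sum.neutral)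
qed

end

context cor35 begin

lemma err_alt: "err_op p r N w a b \<psi> = (\<lambda>y. if y \<in> vecs N then w * chi (ip N b (y - a)) * \<psi> (y - a) else 0)"
proof -
  have X: "(\<Prod>j<N. zeta p ^ tr p r (b j * (y j - a j))) = chi (ip N b (\<lambda>j. y j - a j))" for y
    unfolding chi_def[symmetric] ip_def by (simp add: chi_sum)
  show ?thesis
    unfolding err_op_def fun_diff_def by (rule ext) (subst X, rule refl)
qed

lemma err_app: "y \<in> vecs N \<Longrightarrow> err_op p r N w a b \<psi> y = w * chi (ip N b (y - a)) * \<psi> (y - a)"
  unfolding err_alt by simp
lemma err_app0: "(y::nat\<Rightarrow>'a) \<notin> vecs N \<Longrightarrow> err_op p r N w a b \<psi> y = 0"
  by (subst err_alt) simp

lemma chi_T: "chi (ip N d (y - c)) * chi (ip N b (y - c - a)) * chi (ip N b c)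
   = chi (ip N b (y - a)) * chi (ip N d (y - a - c)) * chi (ip N d a)"
proof -
  have "chi (ip N d (y - c)) * chi (ip N b (y - c - a)) * chi (ip N b c)
       = chi (ip N d (y - c) + ip N b (y - c - a) + ip N b c)" by (simp add: chi_add)
  also have "ip N d (y - c) + ip N b (y - c - a) + ip N b c = ip N b (y - a) + ip N d (y - a - c) + ip N d a"
    by (simp add: ip_diff_right ip_add_right algebra_simps)
  also have "chi \<dots> = chi (ip N b (y - a)) * chi (ip N d (y - a - c)) * chi (ip N d a)" by (simp add: chi_add)
  finally show ?thesis .
qed

lemma comm_iff:
  assumes vs: "a \<in> vecs N" "b \<in> vecs N" "c \<in> vecs N" "d \<in> vecs N" and w: "w \<noteq> 0"
  shows "(err_op p r N 1 c d \<circ> err_op p r N w a b = err_op p r N w a b \<circ> err_op p r N 1 c d)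
     \<longleftrightarrow> chi (ip N b c) = chi (ip N d a)"
proof -
  let ?E1 = "err_op p r N 1 c d" and ?E2 = "err_op p r N w a b"
  have sw: "y - a - c = y - c - a" for y :: "nat \<Rightarrow> 'a" by (simp add: fun_eq_iff algebra_simps)
  have E12: "(?E1 \<circ> ?E2) \<psi> y = w * (chi (ip N d (y - c)) * chi (ip N b (y - c - a))) * \<psi> (y - c - a)"
    if y: "y \<in> vecs N" for \<psi> y
  proof -
    have "(?E1 \<circ> ?E2) \<psi> y = 1 * chi (ip N d (y - c)) * ?E2 \<psi> (y - c)" using err_app[OF y] by simp
    also have "?E2 \<psi> (y - c) = w * chi (ip N b (y - c - a)) * \<psi> (y - c - a)"
      by (rule err_app) (rule vecs_diff[OF y vs(3)])
    finally show ?thesis by (simp only: mult_ac mult_1_left)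
  qed
  have E21: "(?E2 \<circ> ?E1) \<psi> y = w * (chi (ip N b (y - a)) * chi (ip N d (y - a - c))) * \<psi> (y - c - a)"
    if y: "y \<in> vecs N" for \<psi> y
  proof -
    have "(?E2 \<circ> ?E1) \<psi> y = w * chi (ip N b (y - a)) * ?E1 \<psi> (y - a)" using err_app[OF y] by simp
    also have "?E1 \<psi> (y - a) = 1 * chi (ip N d (y - a - c)) * \<psi> (y - a - c)"
      by (rule err_app) (rule vecs_diff[OF y vs(1)])
    finally show ?thesis unfolding sw by (simp only: mult_ac mult_1_left)
  qed
  have E0: "(?E1 \<circ> ?E2) \<psi> y = 0" "(?E2 \<circ> ?E1) \<psi> y = 0" if y: "y \<notin> vecs N" for \<psi> y
    using err_app0[OF y] by simp_all
  show ?thesis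
  proof
    assume eq: "?E1 \<circ> ?E2 = ?E2 \<circ> ?E1"
    have "(?E1 \<circ> ?E2) (\<lambda>_. 1) 0 = (?E2 \<circ> ?E1) (\<lambda>_. 1) 0"
      by (simp only: eq)
    hence "w * (chi (ip N d (0 - c)) * chi (ip N b (0 - c - a))) = w * (chi (ip N b (0 - a)) * chi (ip N d (0 - a - c)))"
      unfolding E12[OF vecs_0] E21[OF vecs_0] by simp
    hence e: "chi (ip N d (0 - c)) * chi (ip N b (0 - c - a)) = chi (ip N b (0 - a)) * chi (ip N d (0 - a - c))"
      using w by simp
    have "chi (ip N d (0 - c)) * chi (ip N b (0 - c - a)) * chi (ip N b c) = chi (ip N d (0 - c)) * chi (ip N b (0 - c - a)) * chi (ip N d a)"
      using chi_T[of N d 0 c b a] unfolding e .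
    moreover have "chi (ip N d (0 - c)) * chi (ip N b (0 - c - a)) \<noteq> 0" using chi_nz by simp
    ultimately show "chi (ip N b c) = chi (ip N d a)" by simp
  next
    assume eq: "chi (ip N b c) = chi (ip N d a)"
    have "chi (ip N d (y - c)) * chi (ip N b (y - c - a)) = chi (ip N b (y - a)) * chi (ip N d (y - a - c))" for y
    proof -
      have "chi (ip N d (y - c)) * chi (ip N b (y - c - a)) * chi (ip N d a) = chi (ip N b (y - a)) * chi (ip N d (y - a - c)) * chi (ip N d a)"
        using chi_T[of N d y c b a] unfolding eq .
      thus ?thesis using chi_nz[of "ip N d a"] by simp
    qed
    note eqy = this
    have "(?E1 \<circ> ?E2) \<psi> y = (?E2 \<circ> ?E1) \<psi> y" for \<psi> y
    proof (cases "y \<in> vecs N")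
      case True show ?thesis unfolding E12[OF True] E21[OF True] eqy ..
    next
      case False show ?thesis unfolding E0[OF False] ..
    qed
    thus "?E1 \<circ> ?E2 = ?E2 \<circ> ?E1" by (intro ext)
  qed
qed

lemma err_compose_scalar:
  assumes a: "(a::nat\<Rightarrow>'a) \<in> vecs N" shows "err_op p r N 1 a b \<circ> err_op p r N w 0 0 = err_op p r N w a b"
proof (intro ext)
  fix \<psi> y
  show "(err_op p r N 1 a b \<circ> err_op p r N w 0 0) \<psi> y = err_op p r N w a b \<psi> y"
  proof (cases "y \<in> vecs N")
    case True
    hence ya: "y - a \<in> vecs N" using vecs_diff a by blast
    have 1: "(err_op p r N 1 a b \<circ> err_op p r N w 0 0) \<psi> y = 1 * chi (ip N b (y - a)) * err_op p r N w 0 0 \<psi> (y - a)"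
      using err_app[OF True] by simp
    have 2: "err_op p r N w 0 0 \<psi> (y - a) = w * chi (ip N 0 (y - a - 0)) * \<psi> (y - a - 0)"
      by (rule err_app[OF ya])
    have 3: "err_op p r N w a b \<psi> y = w * chi (ip N b (y - a)) * \<psi> (y - a)" by (rule err_app[OF True])
    show ?thesis unfolding 1 2 3 by (simp add: chi_0)
  qed (simp add: err_app0)
qed

lemma err_lin: "err_op p r N w a b (\<lambda>x. \<Sum>v\<in>(G::'a state set). \<alpha> v * v x) y = (\<Sum>v\<in>G. \<alpha> v * err_op p r N w a b v y)"
  by (cases "y \<in> vecs N") (simp_all add: err_app err_app0 sum_distrib_left mult_ac)

lemma err_smult: "err_op p r N w a b (\<lambda>x. u * (\<psi>::'a state) x) = (\<lambda>y. u * err_op p r N w a b \<psi> y)"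
  unfolding err_alt by (simp add: fun_eq_iff mult_ac)

lemma err_scalar: "(\<psi>::'a state) \<in> states N \<Longrightarrow> err_op p r N w 0 0 \<psi> = (\<lambda>y. w * \<psi> y)"
  unfolding states_def by (auto simp: fun_eq_iff err_alt chi_0)

lemma omega_nz: "w \<in> omega_pows p \<Longrightarrow> w \<noteq> 0"
  unfolding omega_pows_def using zeta_nz by (auto split: if_splits)

lemma omega_1: "1 \<in> omega_pows p"
  unfolding omega_pows_def using p2 by (auto intro!: exI[of _ 0])

lemma kappa0: "c \<in> C \<Longrightarrow> \<kappa> 0 c = 0"
proof -
  assume c: "c \<in> C"
  have "\<kappa> (0 + 0) c = (\<kappa> 0 c + \<kappa> 0 c) mod p" using iso c unfolding Fp_lin_iso_def by blast
  hence "\<kappa> 0 c = (\<kappa> 0 c + \<kappa> 0 c) mod p" by simp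
  moreover have "\<kappa> 0 c < p" using lf_lt[OF kappa_lf c] .
  ultimately show ?thesis by (cases "\<kappa> 0 c + \<kappa> 0 c < p") (auto simp: le_mod_geq)
qed

lemma Phi0: "Phi p n m k C \<kappa> (dg 0) x = (if x \<in> V then K else 0)"
  unfolding Phi_dg psi_def using kappa0 bsum_C by simp

lemma dual_ip: "block n i b \<in> dual_code n C \<longleftrightarrow> (\<forall>c\<in>C. ip n (block n i b) c = 0)"
  unfolding dual_code_def ip_def using block_vecs by auto

lemma ip_V_dual:
  assumes x: "x \<in> V" and bd: "\<And>i. i < m \<Longrightarrow> block n i b \<in> dual_code n C"
  shows "ip (n * m) b x = 0"
proof -
  have "ip n (block n i b) (block n i x) = 0" if "i < m" for i
    using bd[OF that] V_block[OF x that] unfolding dual_ip by blast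
  thus ?thesis unfolding ip_blocks by simp
qed

lemma stab_gen:
  assumes w: "w \<noteq> 0" and a: "a \<in> vecs (n * m)" and b: "b \<in> vecs (n * m)"
    and H: "\<And>\<psi>. \<psi> \<in> Q \<Longrightarrow> err_op p r (n * m) w a b \<psi> = (\<lambda>x. u * \<psi> x)"
  shows "a \<in> V \<and> bsum a = 0 \<and> (\<forall>i<m. block n i b \<in> dual_code n C) \<and> w = u"
proof -
  let ?E = "err_op p r (n * m) w a b"
  have Hl: "?E (Phi p n m k C \<kappa> (dg l)) y = u * Phi p n m k C \<kappa> (dg l) y" for l y
    using H[OF Phi_in_Q] by metis
  have "?E (Phi p n m k C \<kappa> (dg 0)) a = w * K"
    using a V_0 by (simp add: err_app Phi0 chi_0)
  hence ua: "u * Phi p n m k C \<kappa> (dg 0) a = w * K" using Hl by metis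
  have aV: "a \<in> V"
  proof (rule ccontr)
    assume "a \<notin> V" thus False using ua w K_nz by (simp add: Phi0)
  qed
  have uw: "w = u" using ua aV K_nz by (simp add: Phi0)
  have chi1: "chi (ip (n * m) b x) = 1" if x: "x \<in> V" for x
  proof -
    have ax: "a + x \<in> V" using V_add[OF aV x] .
    have "?E (Phi p n m k C \<kappa> (dg 0)) (a + x) = w * chi (ip (n * m) b x) * K"
      using ax x V_vecs by (simp add: err_app Phi0)
    moreover have "?E (Phi p n m k C \<kappa> (dg 0)) (a + x) = w * K"
      using Hl ax uw by (simp add: Phi0)
    ultimately show ?thesis using w K_nz by simp
  qed
  have dual: "block n i b \<in> dual_code n C" if i: "i < m" for i
    unfolding dual_ip
  proof
    fix c assume c: "c \<in> C"
    show "ip n (block n i b) c = 0"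
    proof (rule nondeg2)
      fix \<beta> :: 'a
      have x: "emb n i (fscale \<beta> c) \<in> V" using V_emb[OF C_scale[OF c] i] .
      have cv: "c \<in> vecs n" using C_vecs c by blast
      have "ip (n * m) b (emb n i (fscale \<beta> c)) = \<beta> * ip n (block n i b) c"
        using ip_emb_right[OF vecs_scale[OF cv] i, where v=b] by (simp add: ip_scale_right)
      thus "ftrace p r (\<beta> * ip n (block n i b) c) = 0" using chi1[OF x] chi_1_iff by simp
    qed
  qed
  have "\<kappa> l (bsum a) = 0" for l
  proof -
    have "?E (Phi p n m k C \<kappa> (dg l)) a = w * K"
      using a V_0 by (simp add: err_app Phi_dg chi_0 psi_0)
    moreover have "?E (Phi p n m k C \<kappa> (dg l)) a = w * (K * psi l (bsum a))"
      using Hl aV uw by (simp add: Phi_dg)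
    ultimately have "psi l (bsum a) = 1" using w K_nz by simp
    thus ?thesis using psi_1_iff bsum_C[OF aV] by simp
  qed
  hence "bsum a = 0" using kappa_sep bsum_C[OF aV] by blast
  thus ?thesis using aV dual uw by blast
qed

lemma stab_suff:
  assumes aV: "a \<in> V" and sa: "bsum a = 0" and b: "b \<in> vecs (n * m)"
    and bd: "\<And>i. i < m \<Longrightarrow> block n i b \<in> dual_code n C" and psi: "\<psi> \<in> Q"
  shows "err_op p r (n * m) 1 a b \<psi> = \<psi>"
proof -
  let ?E = "err_op p r (n * m) 1 a b"
  have gen: "?E (Phi p n m k C \<kappa> (dg l)) y = Phi p n m k C \<kappa> (dg l) y" for l y
  proof (cases "y \<in> vecs (n * m)")
    case False thus ?thesis by (simp add: err_app0 Phi_states)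
  next
    case True
    show ?thesis
    proof (cases "y \<in> V")
      case yV: True
      have d: "y - a \<in> V" using V_diff[OF yV aV] .
      have "bsum (y - a) = bsum y" using sa by (simp add: bsum_diff)
      thus ?thesis using True yV d ip_V_dual[OF d bd] by (simp add: err_app Phi_dg chi_0)
    next
      case yV: False
      have "y - a \<notin> V"
      proof
        assume "y - a \<in> V" hence "(y - a) + a \<in> V" using V_add aV by blast
        thus False using yV by simp
      qed
      thus ?thesis using True yV by (simp add: err_app Phi_dg)
    qed
  qed
  obtain \<alpha> where \<alpha>: "\<psi> = (\<lambda>x. \<Sum>v\<in>Phi p n m k C \<kappa> ` diag m. \<alpha> v * v x)" using Q_form[OF psi] by blast
  have "?E \<psi> y = \<psi> y" for y
  proof -
    have "?E \<psi> y = (\<Sum>v\<in>Phi p n m k C \<kappa> ` diag m. \<alpha> v * ?E v y)" unfolding \<alpha> by (rule err_lin)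
    also have "\<dots> = (\<Sum>v\<in>Phi p n m k C \<kappa> ` diag m. \<alpha> v * v y)"
      by (rule sum.cong) (auto simp: diag_dg gen)
    finally show ?thesis unfolding \<alpha> by simp
  qed
  thus ?thesis by auto
qed

lemma Q_in_states: "\<psi> \<in> Q \<Longrightarrow> \<psi> \<in> states (n * m)"
  unfolding states_def using Q_states by blast

definition Sset where "Sset = {err_op p r (n * m) 1 a b | a b. a \<in> vecs (n * m) \<and> b \<in> vecs (n * m)
            \<and> (\<forall>i<m. block n i a \<in> C \<and> block n i b \<in> dual_code n C)
            \<and> (\<lambda>j. \<Sum>i<m. block n i a j) = (\<lambda>j. 0)}"

lemma Sset_iff: "E \<in> Sset \<longleftrightarrow> (\<exists>a b. E = err_op p r (n * m) 1 a b \<and> a \<in> V \<and> bsum a = 0 \<and> b \<in> vecs (n * m)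
    \<and> (\<forall>i<m. block n i b \<in> dual_code n C))"
  unfolding Sset_def V_def bsum_def zero_fun_def by blast

lemma stabilizer_char: "stabilizer_group p r (n * m) Q = Sset"
proof (intro set_eqI iffI)
  fix E assume E: "E \<in> stabilizer_group p r (n * m) Q"
  then obtain w a b where wab: "E = err_op p r (n * m) w a b" "w \<in> omega_pows p" "a \<in> vecs (n * m)" "b \<in> vecs (n * m)"
    unfolding stabilizer_group_def pauli_def by blast
  have "\<And>\<psi>. \<psi> \<in> Q \<Longrightarrow> err_op p r (n * m) w a b \<psi> = (\<lambda>x. 1 * \<psi> x)"
    using E wab unfolding stabilizer_group_def by simp
  from stab_gen[OF omega_nz[OF wab(2)] wab(3,4) this] show "E \<in> Sset"
    unfolding Sset_iff using wab by blast
next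
  fix E assume "E \<in> Sset"
  then obtain a b where ab: "E = err_op p r (n * m) 1 a b" "a \<in> V" "bsum a = 0" "b \<in> vecs (n * m)"
      "\<forall>i<m. block n i b \<in> dual_code n C" unfolding Sset_iff by blast
  have "E \<in> pauli p r (n * m)" unfolding pauli_def using ab omega_1 V_vecs by blast
  moreover have "\<forall>v\<in>Q. E v = v" using stab_suff ab by blast
  ultimately show "E \<in> stabilizer_group p r (n * m) Q" unfolding stabilizer_group_def by blast
qed

end


context cor35 begin

abbreviation S where "S \<equiv> stabilizer_group p r (n * m) Q"
abbreviation Cent where "Cent \<equiv> centralizer (pauli p r (n * m)) S"
abbreviation SZ where "SZ \<equiv> {E \<circ> Z | E Z. E \<in> S \<and> Z \<in> scalar_elems p r (n * m)}"

lemma S_iff: "E \<in> S \<longleftrightarrow> (\<exists>a b. E = err_op p r (n * m) 1 a b \<and> a \<in> V \<and> bsum a = 0 \<and> b \<in> vecs (n * m)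
    \<and> (\<forall>i<m. block n i b \<in> dual_code n C))"
  by (simp only: stabilizer_char Sset_iff)

lemma dual_vecs: "d \<in> dual_code n C \<Longrightarrow> d \<in> vecs n" unfolding dual_code_def by blast
lemma dual_0: "0 \<in> dual_code n C" unfolding dual_code_def by simp
lemma dual_scale: "d \<in> dual_code n C \<Longrightarrow> fscale \<beta> d \<in> dual_code n C"
  unfolding dual_code_def fscale_def vecs_def by (auto simp: sum_distrib_left[symmetric] mult.assoc)

lemma cent_cond:
  assumes E: "err_op p r (n * m) w a b \<in> Cent" and w: "w \<in> omega_pows p"
    and a: "a \<in> vecs (n * m)" and b: "b \<in> vecs (n * m)"
    and c: "c \<in> V" "bsum c = 0" and d: "d \<in> vecs (n * m)" "\<And>i. i < m \<Longrightarrow> block n i d \<in> dual_code n C"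
  shows "chi (ip (n * m) b c) = chi (ip (n * m) d a)"
proof -
  have "err_op p r (n * m) 1 c d \<in> S" unfolding S_iff using c d by blast
  hence "err_op p r (n * m) w a b \<circ> err_op p r (n * m) 1 c d = err_op p r (n * m) 1 c d \<circ> err_op p r (n * m) w a b"
    using E unfolding centralizer_def by blast
  thus ?thesis using comm_iff[OF a b V_vecs[OF c(1)] d(1) omega_nz[OF w]] by simp
qed

lemma cent_a:
  assumes E: "err_op p r (n * m) w a b \<in> Cent" and w: "w \<in> omega_pows p"
    and a: "a \<in> vecs (n * m)" and b: "b \<in> vecs (n * m)"
  shows "a \<in> V"
  unfolding V_def
proof (intro CollectI conjI allI impI a)
  fix i assume i: "i < m"
  show "block n i a \<in> C"
  proof (rule double_dual[OF block_vecs])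
    fix d' assume d': "d' \<in> dual_code n C"
    show "ip n d' (block n i a) = 0"
    proof (rule nondeg2)
      fix \<beta> :: 'a
      have dd: "fscale \<beta> d' \<in> dual_code n C" using dual_scale[OF d'] .
      have dv: "fscale \<beta> d' \<in> vecs n" using dual_vecs[OF dd] .
      have bl: "block n i' (emb n i (fscale \<beta> d')) \<in> dual_code n C" for i'
        using dd dual_0 by (simp add: block_emb[OF dv])
      have "chi (ip (n * m) b 0) = chi (ip (n * m) (emb n i (fscale \<beta> d')) a)"
        by (rule cent_cond[OF E w a b V_0 bsum_0 emb_vecs[OF i]]) (use bl in blast)
      hence "chi (ip n (fscale \<beta> d') (block n i a)) = 1"
        using ip_emb_left[OF dv i, of a] chi_0 by simp
      thus "ftrace p r (\<beta> * ip n d' (block n i a)) = 0"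
        using chi_1_iff by (simp add: ip_scale_left)
    qed
  qed
qed

lemma cent_b:
  assumes E: "err_op p r (n * m) w a b \<in> Cent" and w: "w \<in> omega_pows p"
    and a: "a \<in> vecs (n * m)" and b: "b \<in> vecs (n * m)"
    and i: "i < m" and i': "i' < m" and u: "u \<in> C"
  shows "ip n (block n i b) u = ip n (block n i' b) u"
proof -
  have "ip n (block n i b) u - ip n (block n i' b) u = 0"
  proof (rule nondeg2)
    fix \<beta> :: 'a
    have bu: "fscale \<beta> u \<in> C" using C_scale[OF u] .
    have bv: "fscale \<beta> u \<in> vecs n" using bu C_vecs by blast
    let ?c = "emb n i (fscale \<beta> u) - emb n i' (fscale \<beta> u)"
    have cV: "?c \<in> V" using V_diff[OF V_emb[OF bu i] V_emb[OF bu i']] .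
    have cs: "bsum ?c = 0" using bsum_emb[OF bv i] bsum_emb[OF bv i'] by (simp add: bsum_diff)
    have "chi (ip (n * m) b ?c) = chi (ip (n * m) 0 a)"
      by (rule cent_cond[OF E w a b cV cs]) (simp_all add: dual_0)
    hence "chi (ip (n * m) b ?c) = 1" using chi_0 by simp
    moreover have "ip (n * m) b ?c = \<beta> * (ip n (block n i b) u - ip n (block n i' b) u)"
      using ip_emb_right[OF bv i, where v=b] ip_emb_right[OF bv i', where v=b]
      by (simp add: ip_diff_right ip_scale_right right_diff_distrib)
    ultimately show "ftrace p r (\<beta> * (ip n (block n i b) u - ip n (block n i' b) u)) = 0"
      using chi_1_iff by simp
  qed
  thus ?thesis by simp
qed

lemma in_SZ:
  assumes w: "w \<in> omega_pows p" and aV: "a \<in> V" and sa: "bsum a = 0" and b: "b \<in> vecs (n * m)"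
    and bd: "\<And>i. i < m \<Longrightarrow> block n i b \<in> dual_code n C"
  shows "err_op p r (n * m) w a b \<in> SZ"
proof -
  have E: "err_op p r (n * m) 1 a b \<in> S" unfolding S_iff using aV sa b bd by blast
  have P: "err_op p r (n * m) w (0::nat\<Rightarrow>'a) 0 \<in> pauli p r (n * m)" unfolding pauli_def using w vecs_0 by blast
  have "\<forall>\<psi>\<in>states (n * m). err_op p r (n * m) w (0::nat\<Rightarrow>'a) 0 \<psi> = (\<lambda>x. w * \<psi> x)" using err_scalar by blast
  hence Z: "err_op p r (n * m) w (0::nat\<Rightarrow>'a) 0 \<in> scalar_elems p r (n * m)"
    unfolding scalar_elems_def using P by blast
  have "err_op p r (n * m) w a b = err_op p r (n * m) 1 a b \<circ> err_op p r (n * m) w 0 0"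
    using err_compose_scalar[OF V_vecs[OF aV]] by simp
  thus ?thesis using E Z by blast
qed

lemma SZ_imp:
  assumes E: "err_op p r (n * m) w a b \<in> SZ" and w: "w \<in> omega_pows p"
    and a: "a \<in> vecs (n * m)" and b: "b \<in> vecs (n * m)"
  shows "a \<in> V \<and> bsum a = 0 \<and> (\<forall>i<m. block n i b \<in> dual_code n C)"
proof -
  obtain E' Z where EZ: "err_op p r (n * m) w a b = E' \<circ> Z" "E' \<in> S" "Z \<in> scalar_elems p r (n * m)"
    using E by blast
  obtain u where u: "\<And>\<psi>. \<psi> \<in> states (n * m) \<Longrightarrow> Z \<psi> = (\<lambda>x. u * \<psi> x)"
    using EZ(3) unfolding scalar_elems_def by blast
  obtain c d where cd: "E' = err_op p r (n * m) 1 c d" using EZ(2) unfolding S_iff by blast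
  have fix': "E' \<psi> = \<psi>" if "\<psi> \<in> Q" for \<psi> using EZ(2) that unfolding stabilizer_group_def by blast
  have "err_op p r (n * m) w a b \<psi> = (\<lambda>x. u * \<psi> x)" if psi: "\<psi> \<in> Q" for \<psi>
  proof -
    have "err_op p r (n * m) w a b \<psi> = E' (\<lambda>x. u * \<psi> x)" using EZ(1) u[OF Q_in_states[OF psi]] by simp
    also have "\<dots> = (\<lambda>y. u * E' \<psi> y)" unfolding cd by (rule err_smult)
    also have "\<dots> = (\<lambda>y. u * \<psi> y)" using fix'[OF psi] by simp
    finally show ?thesis .
  qed
  from stab_gen[OF omega_nz[OF w] a b this] show ?thesis by blast
qed

definition wt :: "(nat \<Rightarrow> 'a) \<Rightarrow> (nat \<Rightarrow> 'a) \<Rightarrow> nat" where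
  "wt a b = card {j. j < n * m \<and> (a j, b j) \<noteq> (0, 0)}"

lemma wt_le: "wt a b \<le> n * m"
  unfolding wt_def by (rule order_trans[OF card_mono[of "{..<n*m}"]]) auto

lemma err_wt_le: "w \<in> omega_pows p \<Longrightarrow> a \<in> vecs (n * m) \<Longrightarrow> b \<in> vecs (n * m)
   \<Longrightarrow> err_wt p r (n * m) (err_op p r (n * m) w a b) \<le> wt a b"
  unfolding err_wt_def wt_def
  by (rule Least_le, rule exI[of _ w], rule exI[of _ a], rule exI[of _ b]) simp

abbreviation dmin where "dmin \<equiv> min_dist n C"

lemma hw_le: "hamming_wt n c \<le> n"
  unfolding hamming_wt_def by (rule order_trans[OF card_mono[of "{..<n}"]]) auto

lemma Dset_fin: "finite {hamming_wt n c | c. c \<in> C \<and> c \<noteq> 0}"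
proof (rule finite_subset[of _ "{..n}"])
  show "{hamming_wt n c | c. c \<in> C \<and> c \<noteq> 0} \<subseteq> {..n}"
    using hw_le by auto
qed simp

lemma dmin_le: "c \<in> C \<Longrightarrow> c \<noteq> 0 \<Longrightarrow> dmin \<le> hamming_wt n c"
  unfolding min_dist_def by (rule Min_le[OF Dset_fin]) blast

lemma dmin_ex: "\<exists>c\<in>C. c \<noteq> 0 \<and> hamming_wt n c = dmin"
proof -
  have "dmin \<in> {hamming_wt n c | c. c \<in> C \<and> c \<noteq> 0}"
  proof -
    obtain c where "c \<in> C" "c \<noteq> 0" using C_nonzero by blast
    hence ne: "{hamming_wt n c | c. c \<in> C \<and> c \<noteq> 0} \<noteq> {}" by blast
    show ?thesis unfolding min_dist_def by (rule Min_in[OF Dset_fin ne])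
  qed
  then obtain c where "dmin = hamming_wt n c" "c \<in> C" "c \<noteq> 0" by blast
  thus ?thesis by metis
qed

lemma block_idx: "t < n \<Longrightarrow> block n i x t = x (i * n + t)" unfolding block_def by simp

lemma lower_bound:
  assumes Bad: "err_op p r (n * m) w a b \<in> Cent - SZ" and w: "w \<in> omega_pows p"
    and a: "a \<in> vecs (n * m)" and b: "b \<in> vecs (n * m)"
  shows "min dmin m \<le> wt a b"
proof -
  have E: "err_op p r (n * m) w a b \<in> Cent" using Bad by blast
  have aV: "a \<in> V" using cent_a[OF E w a b] .
  have notSZ: "\<not> (bsum a = 0 \<and> (\<forall>i<m. block n i b \<in> dual_code n C))"
    using in_SZ[OF w aV _ b] Bad by blast
  let ?W = "{j. j < n * m \<and> (a j, b j) \<noteq> (0, 0)}"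
  have finW: "finite ?W" by (rule finite_subset[of _ "{..<n*m}"]) auto
  have idx_lt: "i * n + t < n * m" if "i < m" "t < n" for i t
  proof -
    have "i * n + t < i * n + n" using that by simp
    also have "\<dots> = Suc i * n" by simp
    also have "\<dots> \<le> m * n" using that by (intro mult_le_mono1) simp
    finally show ?thesis by (simp add: mult.commute)
  qed
  show ?thesis
  proof (cases "bsum a = 0")
    case False
    obtain i where i: "i < m" "block n i a \<noteq> 0"
    proof (rule ccontr)
      assume "\<not> thesis"
      hence "\<forall>i<m. block n i a = 0" using that by blast
      hence "bsum a = 0" unfolding bsum_fun by simp
      thus False using False by simp
    qed
    have biC: "block n i a \<in> C" using V_block[OF aV i(1)] .
    have "dmin \<le> hamming_wt n (block n i a)" using dmin_le[OF biC i(2)] .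
    also have "hamming_wt n (block n i a) = card ((\<lambda>t. i * n + t) ` {t. t < n \<and> block n i a t \<noteq> 0})"
      unfolding hamming_wt_def by (rule card_image[symmetric]) (auto intro: inj_onI)
    also have "\<dots> \<le> card ?W"
      by (rule card_mono[OF finW]) (use i idx_lt in \<open>auto simp: block_idx\<close>)
    finally show ?thesis unfolding wt_def by simp
  next
    case True
    then obtain i0 where i0: "i0 < m" "block n i0 b \<notin> dual_code n C" using notSZ by blast
    have nz: "\<exists>t<n. b (i * n + t) \<noteq> 0" if i: "i < m" for i
    proof (rule ccontr)
      assume "\<not> ?thesis"
      hence "block n i b = 0" unfolding block_def by (auto simp: fun_eq_iff)
      hence "\<forall>u\<in>C. ip n (block n i0 b) u = 0"
        using cent_b[OF E w a b i0(1) i] by simp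
      thus False using i0(2) dual_ip by blast
    qed
    define tt where "tt i = (SOME t. t < n \<and> b (i * n + t) \<noteq> 0)" for i
    have tt: "tt i < n \<and> b (i * n + tt i) \<noteq> 0" if "i < m" for i
      unfolding tt_def using someI_ex[OF nz[OF that]] by blast
    have "m = card ((\<lambda>i. i * n + tt i) ` {..<m})"
    proof -
      have "inj_on (\<lambda>i. i * n + tt i) {..<m}"
      proof (rule inj_onI)
        fix i i' assume ii: "i \<in> {..<m}" "i' \<in> {..<m}" "i * n + tt i = i' * n + tt i'"
        have t1: "tt i < n" using tt ii(1) by blast
        have t2: "tt i' < n" using tt ii(2) by blast
        have "(i * n + tt i) div n = i" using t1 by simp
        moreover have "(i' * n + tt i') div n = i'" using t2 by simp
        ultimately show "i = i'" using ii(3) by metis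
      qed
      thus ?thesis by (simp add: card_image)
    qed
    also have "\<dots> \<le> card ?W"
      by (rule card_mono[OF finW]) (use tt idx_lt in auto)
    finally show ?thesis unfolding wt_def by simp
  qed
qed

lemma err_wt_lower:
  assumes Bad: "E \<in> Cent - SZ" shows "min dmin m \<le> err_wt p r (n * m) E"
proof -
  have "E \<in> Cent" using Bad by (rule DiffD1)
  hence "E \<in> pauli p r (n * m)" by (simp add: centralizer_def)
  then obtain w a b where wab: "w \<in> omega_pows p" "a \<in> vecs (n * m)" "b \<in> vecs (n * m)" "E = err_op p r (n * m) w a b"
    unfolding pauli_def by blast
  let ?P = "\<lambda>t. \<exists>w a b. w \<in> omega_pows p \<and> a \<in> vecs (n * m) \<and> b \<in> vecs (n * m)
      \<and> E = err_op p r (n * m) w a b \<and> t = card {j. j < n * m \<and> (a j, b j) \<noteq> (0, 0)}"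
  have "?P (wt a b)" unfolding wt_def
    by (rule exI[of _ w], rule exI[of _ a], rule exI[of _ b]) (simp add: wab)
  hence "?P (Least ?P)" by (rule LeastI)
  then obtain w' a' b' where w': "w' \<in> omega_pows p" "a' \<in> vecs (n * m)" "b' \<in> vecs (n * m)"
    "E = err_op p r (n * m) w' a' b'" "Least ?P = card {j. j < n * m \<and> (a' j, b' j) \<noteq> (0, 0)}"
    by blast
  have "min dmin m \<le> wt a' b'" using Bad unfolding w'(4) by (rule lower_bound[OF _ w'(1-3)])
  thus ?thesis unfolding err_wt_def using w'(5) by (simp add: wt_def)
qed

end


context cor35 begin

lemma m0: "0 < m" using m2 by simp

lemma idx_lt: "i < m \<Longrightarrow> t < n \<Longrightarrow> i * n + t < n * m"
proof -
  assume that: "i < m" "t < n"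
  have "i * n + t < i * n + n" using that by simp
  also have "\<dots> = Suc i * n" by simp
  also have "\<dots> \<le> m * n" using that by (intro mult_le_mono1) simp
  finally show ?thesis by (simp add: mult.commute)
qed

lemma S_elem:
  assumes "s \<in> S"
  obtains c d where "s = err_op p r (n * m) 1 c d" "c \<in> V" "bsum c = 0" "d \<in> vecs (n * m)"
    "\<And>i. i < m \<Longrightarrow> block n i d \<in> dual_code n C"
  using assms unfolding S_iff by blast

lemma in_Cent:
  assumes a: "a \<in> vecs (n * m)" and b: "b \<in> vecs (n * m)"
    and cond: "\<And>c d. c \<in> V \<Longrightarrow> bsum c = 0 \<Longrightarrow> d \<in> vecs (n * m) \<Longrightarrow> (\<And>i. i < m \<Longrightarrow> block n i d \<in> dual_code n C)
        \<Longrightarrow> chi (ip (n * m) b c) = chi (ip (n * m) d a)"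
  shows "err_op p r (n * m) 1 a b \<in> Cent"
proof -
  have P: "err_op p r (n * m) 1 a b \<in> pauli p r (n * m)" unfolding pauli_def using omega_1 a b by blast
  have "err_op p r (n * m) 1 a b \<circ> s = s \<circ> err_op p r (n * m) 1 a b" if s: "s \<in> S" for s
  proof -
    obtain c d where cd: "s = err_op p r (n * m) 1 c d" "c \<in> V" "bsum c = 0" "d \<in> vecs (n * m)"
      "\<And>i. i < m \<Longrightarrow> block n i d \<in> dual_code n C" using S_elem[OF s] by metis
    have "chi (ip (n * m) b c) = chi (ip (n * m) d a)" using cond[OF cd(2,3,4,5)] by blast
    hence "s \<circ> err_op p r (n * m) 1 a b = err_op p r (n * m) 1 a b \<circ> s"
      unfolding cd(1) using comm_iff[OF a b V_vecs[OF cd(2)] cd(4), of 1] by simp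
    thus ?thesis by simp
  qed
  thus ?thesis unfolding centralizer_def using P by blast
qed

lemma elemA: "\<exists>E\<in>Cent - SZ. err_wt p r (n * m) E \<le> dmin"
proof -
  obtain c0 where c0: "c0 \<in> C" "c0 \<noteq> 0" "hamming_wt n c0 = dmin" using dmin_ex by blast
  have c0v: "c0 \<in> vecs n" using c0 C_vecs by blast
  define a where "a = emb n 0 c0"
  have av: "a \<in> vecs (n * m)" unfolding a_def using emb_vecs[OF m0] .
  have Cent: "err_op p r (n * m) 1 a 0 \<in> Cent"
  proof (rule in_Cent[OF av vecs_0])
    fix c d assume cd: "c \<in> V" "bsum c = 0" "d \<in> vecs (n * m)" "\<And>i. i < m \<Longrightarrow> block n i d \<in> dual_code n C"
    have "ip (n * m) d a = ip n (block n 0 d) c0" unfolding a_def by (rule ip_emb_right[OF c0v m0])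
    also have "\<dots> = 0" using cd(4)[OF m0] c0(1) unfolding dual_ip by blast
    finally show "chi (ip (n * m) 0 c) = chi (ip (n * m) d a)" by simp
  qed
  have notSZ: "err_op p r (n * m) 1 a 0 \<notin> SZ"
  proof
    assume "err_op p r (n * m) 1 a 0 \<in> SZ"
    hence "bsum a = 0" using SZ_imp[OF _ omega_1 av vecs_0] by blast
    thus False unfolding a_def using bsum_emb[OF c0v m0] c0(2) by simp
  qed
  have "{j. j < n * m \<and> (a j, (0::nat\<Rightarrow>'a) j) \<noteq> (0, 0)} = {j. j < n \<and> c0 j \<noteq> 0}"
  proof -
    have "n \<le> n * m" using m0 by simp
    hence nm: "x < n \<Longrightarrow> x < n * m" for x by linarith
    show ?thesis unfolding a_def emb_def by (auto intro: nm)
  qed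
  hence "wt a 0 = dmin" unfolding wt_def hamming_wt_def using c0(3) by (simp add: hamming_wt_def)
  hence "err_wt p r (n * m) (err_op p r (n * m) 1 a 0) \<le> dmin"
    using err_wt_le[OF omega_1 av vecs_0] by simp
  thus ?thesis using Cent notSZ by blast
qed

lemma elemB: "\<exists>E\<in>Cent - SZ. err_wt p r (n * m) E \<le> m"
proof -
  obtain c1 where c1: "c1 \<in> C" "c1 \<noteq> 0" using C_nonzero by blast
  obtain j0 where j0: "c1 j0 \<noteq> 0" using c1(2) unfolding zero_fun_def fun_eq_iff by auto
  have "c1 \<in> vecs n" using c1(1) C_vecs by blast
  hence c1z: "\<And>i. n \<le> i \<Longrightarrow> c1 i = 0" unfolding vecs_def by blast
  have j0n: "j0 < n"
  proof (rule ccontr)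
    assume "\<not> j0 < n" thus False using c1z[of j0] j0 by simp
  qed
  define b :: "nat \<Rightarrow> 'a" where "b = (\<lambda>j. if j < n * m \<and> j mod n = j0 then 1 else 0)"
  define e0 :: "nat \<Rightarrow> 'a" where "e0 = (\<lambda>t. if t = j0 then 1 else 0)"
  have bv: "b \<in> vecs (n * m)" unfolding b_def vecs_def by simp
  have blk: "block n i b = e0" if i: "i < m" for i
  proof
    fix t show "block n i b t = e0 t"
    proof (cases "t < n")
      case True
      have "(i * n + t) mod n = t" using True by simp
      thus ?thesis using True idx_lt[OF i True] unfolding block_def b_def e0_def by simp
    next
      case False thus ?thesis using j0n unfolding block_def e0_def by auto
    qed
  qed
  have ipe: "ip n e0 x = x j0" for x
  proof -
    have "ip n e0 x = (\<Sum>t<n. if t = j0 then x t else 0)" unfolding ip_def e0_def by (rule sum.cong) auto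
    also have "\<dots> = x j0" using j0n by (simp add: sum.delta)
    finally show ?thesis .
  qed
  have Cent: "err_op p r (n * m) 1 0 b \<in> Cent"
  proof (rule in_Cent[OF vecs_0 bv])
    fix c d assume cd: "c \<in> V" "bsum c = 0" "d \<in> vecs (n * m)" "\<And>i. i < m \<Longrightarrow> block n i d \<in> dual_code n C"
    have "ip (n * m) b c = (\<Sum>i<m. ip n (block n i b) (block n i c))" by (rule ip_blocks)
    also have "\<dots> = (\<Sum>i<m. block n i c j0)" by (rule sum.cong) (simp_all add: blk ipe)
    also have "\<dots> = bsum c j0" unfolding bsum_def by simp
    also have "\<dots> = 0" using cd(2) by simp
    finally show "chi (ip (n * m) b c) = chi (ip (n * m) d 0)" by simp
  qed
  have notSZ: "err_op p r (n * m) 1 0 b \<notin> SZ"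
  proof
    assume "err_op p r (n * m) 1 0 b \<in> SZ"
    hence "block n 0 b \<in> dual_code n C" using SZ_imp[OF _ omega_1 vecs_0 bv] m0 by blast
    hence "ip n e0 c1 = 0" using blk[OF m0] c1(1) unfolding dual_ip by metis
    thus False using ipe j0 by simp
  qed
  have "{j. j < n * m \<and> ((0::nat\<Rightarrow>'a) j, b j) \<noteq> (0, 0)} = (\<lambda>i. i * n + j0) ` {..<m}"
  proof (intro set_eqI iffI)
    fix j assume "j \<in> {j. j < n * m \<and> ((0::nat\<Rightarrow>'a) j, b j) \<noteq> (0, 0)}"
    hence "b j \<noteq> 0" "j < n * m" by auto
    hence j: "j < n * m" "j mod n = j0" unfolding b_def by (auto split: if_splits)
    have "j < m * n" using j(1) by (simp add: mult.commute)
    hence "j div n < m" by (rule less_mult_imp_div_less)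
    moreover have "j = j div n * n + j0" using div_mult_mod_eq[of j n] j(2) by simp
    ultimately show "j \<in> (\<lambda>i. i * n + j0) ` {..<m}" by blast
  next
    fix j assume "j \<in> (\<lambda>i. i * n + j0) ` {..<m}"
    then obtain i where i: "i < m" "j = i * n + j0" by blast
    have "j < n * m" using idx_lt[OF i(1) j0n] i(2) by simp
    moreover have "j mod n = j0" using i(2) j0n by simp
    ultimately show "j \<in> {j. j < n * m \<and> ((0::nat\<Rightarrow>'a) j, b j) \<noteq> (0, 0)}" unfolding b_def by simp
  qed
  moreover have "inj_on (\<lambda>i. i * n + j0) {..<m}"
  proof (rule inj_onI)
    fix i i' assume "i * n + j0 = i' * n + j0"
    hence "i * n = i' * n" by simp
    thus "i = i'" using j0n by simp
  qed
  ultimately have "wt 0 b = m" unfolding wt_def by (simp add: card_image)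
  hence "err_wt p r (n * m) (err_op p r (n * m) 1 0 b) \<le> m"
    using err_wt_le[OF omega_1 vecs_0 bv] by simp
  thus ?thesis using Cent notSZ by blast
qed

lemma qdist_eq: "qdist p r (n * m) Q = min dmin m"
  unfolding qdist_def
proof (rule Min_eqI)
  show "finite (err_wt p r (n * m) ` (Cent - SZ))"
  proof (rule finite_subset[of _ "{..n * m}"])
    show "err_wt p r (n * m) ` (Cent - SZ) \<subseteq> {..n * m}"
    proof
      fix t assume "t \<in> err_wt p r (n * m) ` (Cent - SZ)"
      then obtain E where E: "E \<in> Cent - SZ" "t = err_wt p r (n * m) E" by (elim imageE)
      have "E \<in> Cent" using E(1) by (rule DiffD1)
      hence "E \<in> pauli p r (n * m)" by (simp add: centralizer_def)
      then obtain w a b where wab: "w \<in> omega_pows p" "a \<in> vecs (n * m)" "b \<in> vecs (n * m)" "E = err_op p r (n * m) w a b"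
        unfolding pauli_def by blast
      have "t \<le> wt a b" unfolding E(2) wab(4) by (rule err_wt_le[OF wab(1-3)])
      thus "t \<in> {..n * m}" using wt_le[of a b] by simp
    qed
  qed simp
next
  fix t assume "t \<in> err_wt p r (n * m) ` (Cent - SZ)"
  then obtain E where "E \<in> Cent - SZ" "t = err_wt p r (n * m) E" by (elim imageE)
  thus "min dmin m \<le> t" using err_wt_lower by simp
next
  show "min dmin m \<in> err_wt p r (n * m) ` (Cent - SZ)"
  proof (cases "dmin \<le> m")
    case True
    obtain E where E: "E \<in> Cent - SZ" "err_wt p r (n * m) E \<le> dmin" using elemA by (elim bexE)
    have "min dmin m \<le> err_wt p r (n * m) E" using err_wt_lower[OF E(1)] .
    hence "err_wt p r (n * m) E = min dmin m" using E(2) True by simp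
    thus ?thesis by (rule image_eqI[OF sym E(1)])
  next
    case False
    obtain E where E: "E \<in> Cent - SZ" "err_wt p r (n * m) E \<le> m" using elemB by (elim bexE)
    have "min dmin m \<le> err_wt p r (n * m) E" using err_wt_lower[OF E(1)] .
    hence "err_wt p r (n * m) E = min dmin m" using E(2) False by simp
    thus ?thesis by (rule image_eqI[OF sym E(1)])
  qed
qed

end

theorem corollary3p5:
  fixes C :: "(nat \<Rightarrow> 'a::{finite,field}) set"
    and \<kappa> :: "'b::{finite,field} \<Rightarrow> (nat \<Rightarrow> 'a) \<Rightarrow> nat"
    and p r n k m :: nat
  assumes "prime p" and "r \<ge> 1" and "CARD('a) = p ^ r"
    and "linear_code n C" and "code_dim C = k" and "1 \<le> k" and "k < n"
    and "m \<ge> 2"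
    and "CARD('b) = CARD('a) ^ k"
    and "Fp_lin_iso p C \<kappa>"
  shows "qdist p r (n * m) (code_space p n m k C \<kappa>) = min (min_dist n C) m
    \<and> stabilizer_group p r (n * m) (code_space p n m k C \<kappa>)
        = {err_op p r (n * m) 1 a b | a b. a \<in> vecs (n * m) \<and> b \<in> vecs (n * m)
            \<and> (\<forall>i<m. block n i a \<in> C \<and> block n i b \<in> dual_code n C)
            \<and> (\<lambda>j. \<Sum>i<m. block n i a j) = (\<lambda>j. 0)}"
proof -
  interpret cor35 C \<kappa> p r n k m
    by (rule cor35.intro) (rule assms)+
  show ?thesis by (intro conjI qdist_eq stabilizer_char[unfolded Sset_def])
qed

end
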